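(* Let $r\ge1$ and $G\subset\mathbb{Z}_2^r$ a subgroup with $1^r=(1,\dots,1)\in G$. Then: (1) if $\dim G=1$, then $G=\langle1^r\rangle$; (2) if $\dim G=r$, then $G=\mathbb{Z}_2^r$; (3) if $\dim G=2$, then $G$ is decomposable; (4) if $\dim G=r-1$ and $G$ is indecomposable, then $r$ is even and $G=G_r^{\rm even}$.
   Context: $\dim G$ is the dimension over $\mathbb{Z}_2$. For $I\subset\{1,\dots,r\}$ let $\mathbb{Z}_2^I$ be the codewords supported in $I$. $G$ is decomposable if there is a partition $\{1,\dots,r\}=I\sqcup J$ with $I,J$ nonempty and $G=(G\cap\mathbb{Z}_2^I)\oplus(G\cap\mathbb{Z}_2^J)$ (i.e. $G$ is an orthogonal direct sum $G_1\perp G_2$ of codes on complementary coordinate sets); indecomposable otherwise. For even $r$, $G_r^{\rm even}=\{g\in\mathbb{Z}_2^r: g \text{ has an even number of nonzero coordinates}\}$. *)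

theory Defs
  imports "HOL-Analysis.Analysis" "HOL-Library.Z2"
begin

text \<open>Vectors of Z_2^r are modelled as bit ^ 'n with r = CARD('n); coordinates are indexed by 'n.\<close>

definition is_subgroup_Z2 :: "(bit ^ 'n) set \<Rightarrow> bool" where
  "is_subgroup_Z2 G \<longleftrightarrow> 0 \<in> G \<and> (\<forall>x\<in>G. \<forall>y\<in>G. x + y \<in> G) \<and> (\<forall>x\<in>G. - x \<in> G)"

definition dimZ2 :: "(bit ^ 'n) set \<Rightarrow> nat" where
  "dimZ2 G = vector_space.dim ((*s) :: bit \<Rightarrow> bit ^ 'n \<Rightarrow> bit ^ 'n) G"

definition supported_in :: "'n set \<Rightarrow> (bit ^ 'n) set" where
  "supported_in I = {v. \<forall>i. i \<notin> I \<longrightarrow> v $ i = 0}"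

definition decomposable_Z2 :: "(bit ^ 'n) set \<Rightarrow> bool" where
  "decomposable_Z2 G \<longleftrightarrow> (\<exists>I J. I \<inter> J = {} \<and> I \<union> J = UNIV \<and> I \<noteq> {} \<and> J \<noteq> {} \<and>
      G = {x + y | x y. x \<in> G \<inter> supported_in I \<and> y \<in> G \<inter> supported_in J})"

definition ones_Z2 :: "bit ^ 'n" where
  "ones_Z2 = (\<chi> i. 1)"

definition G_even :: "(bit ^ 'n) set" where
  "G_even = {g. even (card {i. g $ i \<noteq> 0})}"

end

theory Submission
  imports Defs
begin

lemma bitc: "(c::bit) = 0 \<or> c = 1"
  by (cases c) simp_all

lemma bit_add_self[simp]: "(x::bit) + x = 0"
  by (cases x) simp_all

lemma bitv_add_self[simp]: "(x::bit^'n) + x = 0"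
  by (simp add: vec_eq_iff)

lemma bitv_minus: "(x::bit^'n) - y = x + y"
  by (simp add: vec_eq_iff)

lemma subsp:
  fixes G :: "(bit ^ 'n) set"
  assumes "is_subgroup_Z2 G"
  shows "vec.subspace G"
proof -
  have "c *s x \<in> G" if "x \<in> G" for c x
    using bitc[of c] that assms unfolding is_subgroup_Z2_def by auto
  then show ?thesis using assms unfolding vec.subspace_def is_subgroup_Z2_def by auto
qed

lemma spanG:
  fixes G :: "(bit ^ 'n) set"
  assumes "is_subgroup_Z2 G"
  shows "vec.span G = G"
  using subsp[OF assms] by simp

lemma full:
  fixes S :: "(bit ^ 'n) set"
  assumes "vec.dim S = CARD('n)"
  shows "vec.span S = UNIV"
proof -
  have "vec.dim (UNIV :: (bit ^ 'n) set) = CARD('n)"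
    using card_cart_basis[where 'a=bit and 'i='n] by simp
  then have "vec.span S = vec.span UNIV"
    using assms by (intro vec.dim_eq_span) auto
  then show ?thesis by simp
qed

lemma ones_nz: "(ones_Z2 :: bit^'n) \<noteq> 0"
  by (simp add: ones_Z2_def vec_eq_iff)

lemma span_ones: "vec.span {ones_Z2 :: bit^'n} = {0, ones_Z2}"
proof -
  have "range (\<lambda>k. k *s (ones_Z2 :: bit^'n)) = {0, ones_Z2}"
  proof
    show "range (\<lambda>k. k *s (ones_Z2 :: bit^'n)) \<subseteq> {0, ones_Z2}"
      using bitc by auto
    show "{0, ones_Z2} \<subseteq> range (\<lambda>k. k *s (ones_Z2 :: bit^'n))"
    proof -
      have "0 = (0::bit) *s (ones_Z2 :: bit^'n)" "ones_Z2 = (1::bit) *s (ones_Z2 :: bit^'n)" by simp_all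
      then show ?thesis by blast
    qed
  qed
  then show ?thesis by (simp add: vec.span_singleton)
qed

lemma dim_ones: "vec.dim {ones_Z2 :: bit^'n} = 1"
proof -
  have nz: "(ones_Z2 :: bit^'n) \<notin> vec.span {}" using ones_nz by simp
  have "vec.dim {ones_Z2 :: bit^'n} = (if (ones_Z2 :: bit^'n) \<in> vec.span {} then vec.dim ({} :: (bit^'n) set) else vec.dim ({} :: (bit^'n) set) + 1)"
    by (rule vec.dim_insert)
  then show ?thesis using nz by simp
qed

theorem mainTheorem17:
  fixes G :: "(bit ^ 'n) set"
  assumes "is_subgroup_Z2 G" and "ones_Z2 \<in> G"
  shows "(dimZ2 G = 1 \<longrightarrow> G = {0, ones_Z2})
       \<and> (dimZ2 G = CARD('n) \<longrightarrow> G = UNIV)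
       \<and> (dimZ2 G = 2 \<longrightarrow> decomposable_Z2 G)
       \<and> (dimZ2 G = CARD('n) - 1 \<and> \<not> decomposable_Z2 G \<longrightarrow> even (CARD('n)) \<and> G = G_even)"
proof (intro conjI impI)
  have sG: "vec.span G = G" using spanG[OF assms(1)] .
  have add: "x + y \<in> G" if "x \<in> G" "y \<in> G" for x y
    using assms(1) that unfolding is_subgroup_Z2_def by auto
  have zero: "0 \<in> G" using assms(1) unfolding is_subgroup_Z2_def by auto
  have dimeq: "dimZ2 G = vec.dim G" unfolding dimZ2_def by simp
  have onesub: "{ones_Z2} \<subseteq> G" using assms(2) by auto
  have dim_ge1: "vec.dim G \<ge> 1"
    using vec.dim_subset[OF onesub] unfolding dim_ones .
  {
    assume "dimZ2 G = 1"
    then have "vec.span {ones_Z2} = vec.span G"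
      by (intro vec.dim_eq_span onesub) (simp add: dimeq dim_ones ones_nz)
    then show "G = {0, ones_Z2}" using sG span_ones by metis
  }
  {
    assume "dimZ2 G = CARD('n)"
    then have "vec.span G = UNIV" using full dimeq by metis
    then show "G = UNIV" using sG by simp
  }
  {
    assume d2: "dimZ2 G = 2"
    obtain g where gG: "g \<in> G" and gn: "g \<notin> vec.span {ones_Z2}"
    proof -
      { assume "G \<subseteq> vec.span {ones_Z2}"
        then have "vec.dim G \<le> vec.dim (vec.span {ones_Z2 :: bit^'n})" by (rule vec.dim_subset)
        moreover have "vec.dim (vec.span {ones_Z2 :: bit^'n}) = 1"
          using dim_ones by (simp only: vec.dim_span)
        ultimately have False using d2 dimeq by linarith }
      then show ?thesis using that by blast
    qed
    have g0: "g \<noteq> 0" and g1: "g \<noteq> ones_Z2" using gn span_ones by auto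
    have "vec.dim (insert g {ones_Z2}) = vec.dim {ones_Z2 :: bit^'n} + 1"
      using vec.dim_insert[of g "{ones_Z2}"] gn by metis
    then have "vec.dim (insert g {ones_Z2}) = 2"
      unfolding dim_ones by simp
    then have spG: "vec.span (insert g {ones_Z2}) = G"
      using vec.dim_eq_span[of "insert g {ones_Z2}" G] gG assms(2) sG d2 dimeq by auto
    have hcases: "h \<in> {0, ones_Z2, g, g + ones_Z2}" if "h \<in> G" for h
    proof -
      from that spG have "h \<in> vec.span (insert g {ones_Z2})" by simp
      then obtain a where "h - a *s g \<in> vec.span {ones_Z2}"
        using vec.span_breakdown_eq by blast
      then obtain b where "h - a *s g = b *s ones_Z2" by (auto simp: vec.span_singleton)
      then have "h = a *s g + b *s ones_Z2" by (metis diff_eq_eq add.commute)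
      then show ?thesis using bitc[of a] bitc[of b] by (auto simp: add.commute)
    qed
    define I where "I = {i. g $ i \<noteq> 0}"
    define J where "J = {i. g $ i = 0}"
    have I0: "I \<noteq> {}" using g0 unfolding I_def by (auto simp: vec_eq_iff)
    have J0: "J \<noteq> {}" using g1 unfolding J_def by (auto simp: vec_eq_iff ones_Z2_def)
    have gI: "g \<in> supported_in I" unfolding supported_in_def I_def by auto
    have oJ: "g + ones_Z2 \<in> supported_in J" unfolding supported_in_def J_def
      by (auto simp: ones_Z2_def)
    have zI: "0 \<in> supported_in K" for K unfolding supported_in_def by auto
    have goG: "g + ones_Z2 \<in> G" using add gG assms(2) by auto
    have "G = {x + y | x y. x \<in> G \<inter> supported_in I \<and> y \<in> G \<inter> supported_in J}"
    proof
      show "G \<subseteq> {x + y | x y. x \<in> G \<inter> supported_in I \<and> y \<in> G \<inter> supported_in J}"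
      proof
        fix h assume "h \<in> G"
        then have "h \<in> {0, ones_Z2, g, g + ones_Z2}" by (rule hcases)
        moreover have "ones_Z2 = g + (g + ones_Z2)" by (simp add: add.assoc[symmetric])
        ultimately show "h \<in> {x + y | x y. x \<in> G \<inter> supported_in I \<and> y \<in> G \<inter> supported_in J}"
          using gI oJ zI zero gG goG
          by (smt (verit, best) IntI add_0 add_0_right empty_iff insert_iff mem_Collect_eq)
      qed
      show "{x + y | x y. x \<in> G \<inter> supported_in I \<and> y \<in> G \<inter> supported_in J} \<subseteq> G"
        using add by auto
    qed
    then show "decomposable_Z2 G" unfolding decomposable_Z2_def
      using I0 J0 by (intro exI[of _ I] exI[of _ J]) (auto simp: I_def J_def)
  }
  {
    assume hyp: "dimZ2 G = CARD('n) - 1 \<and> \<not> decomposable_Z2 G"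
    have c2: "CARD('n) \<ge> 2" using hyp dim_ge1 dimeq by simp
    have other: "\<exists>j. j \<noteq> i" for i :: 'n
    proof (rule ccontr)
      assume "\<not> ?thesis"
      then have "UNIV = {i}" by auto
      then have "CARD('n) = card {i}" by (rule arg_cong)
      then have "CARD('n) = 1" by simp
      then show False using c2 by simp
    qed
    define e where "e = (\<lambda>i::'n. axis i (1::bit))"
    have A: "e i \<notin> G" for i
    proof
      assume eG: "e i \<in> G"
      have "G = {x + y | x y. x \<in> G \<inter> supported_in {i} \<and> y \<in> G \<inter> supported_in (- {i})}"
      proof
        show "G \<subseteq> {x + y | x y. x \<in> G \<inter> supported_in {i} \<and> y \<in> G \<inter> supported_in (- {i})}"
        proof
          fix h assume hG: "h \<in> G"
          define x where "x = (h $ i) *s e i"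
          have xG: "x \<in> G" using bitc[of "h $ i"] eG zero unfolding x_def by auto
          have yG: "h + x \<in> G" using add hG xG by auto
          have xs: "x \<in> supported_in {i}" unfolding supported_in_def x_def e_def
            by (auto simp: axis_def)
          have ys: "h + x \<in> supported_in (- {i})" unfolding supported_in_def x_def e_def
            by (auto simp: axis_def)
          have "h = x + (h + x)" by (metis add.left_commute bitv_add_self add.right_neutral)
          then show "h \<in> {x + y | x y. x \<in> G \<inter> supported_in {i} \<and> y \<in> G \<inter> supported_in (- {i})}"
            using xG yG xs ys by blast
        qed
        show "{x + y | x y. x \<in> G \<inter> supported_in {i} \<and> y \<in> G \<inter> supported_in (- {i})} \<subseteq> G"
          using add by auto
      qed
      moreover have "- {i} \<noteq> {}" using other[of i] by auto
      ultimately have "decomposable_Z2 G" unfolding decomposable_Z2_def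
        by (intro exI[of _ "{i}"] exI[of _ "- {i}"]) auto
      then show False using hyp by simp
    qed
    have B: "v \<in> G \<or> v + e i \<in> G" for v i
    proof -
      have "vec.dim (insert (e i) G) = CARD('n)"
        using vec.dim_insert[of "e i" G] A[of i] sG hyp dimeq c2 by simp
      then have "vec.span (insert (e i) G) = UNIV" using full by metis
      then have "v \<in> vec.span (insert (e i) G)" by simp
      then obtain k where "v - k *s e i \<in> G" using vec.span_breakdown_eq sG by blast
      then show ?thesis using bitc[of k] by (auto simp: bitv_minus)
    qed
    have C: "e a + e b \<in> G" for a b
      using B[of "e b" a] A[of b] by (simp add: add.commute)
    define chi where "chi = (\<lambda>S::'n set. (\<chi> i. if i \<in> S then (1::bit) else 0))"
    define i0 :: 'n where "i0 = undefined"
    have D: "(even (card S) \<longrightarrow> chi S \<in> G) \<and> (odd (card S) \<longrightarrow> chi S + e i0 \<in> G)"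
      for S :: "'n set"
    proof -
      have "finite S" by simp
      then show ?thesis
      proof (induction S rule: finite_induct)
        case empty
        have "chi {} = 0" unfolding chi_def by (simp add: vec_eq_iff)
        then show ?case using zero by simp
      next
        case (insert a S)
        have ch: "chi (insert a S) = chi S + e a"
          unfolding chi_def e_def using insert(2) by (auto simp: vec_eq_iff axis_def)
        have cd: "card (insert a S) = Suc (card S)" using insert by simp
        show ?case
        proof (cases "even (card S)")
          case True
          then have "chi S \<in> G" using insert.IH by simp
          then have "chi S + (e a + e i0) \<in> G" using add C by blast
          then show ?thesis using True by (simp add: ch cd add.assoc)
        next
          case False
          then have "chi S + e i0 \<in> G" using insert.IH by simp
          then have "(chi S + e i0) + (e i0 + e a) \<in> G" using add C by blast
          moreover have "(chi S + e i0) + (e i0 + e a) = chi S + e a"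
            by (metis add.assoc bitv_add_self add.right_neutral)
          ultimately show ?thesis using False by (simp add: ch cd)
        qed
      qed
    qed
    have vchi: "v = chi {i. v $ i \<noteq> 0}" for v :: "bit^'n"
      unfolding chi_def by (simp add: vec_eq_iff)
    have GE: "G = G_even"
    proof
      show "G \<subseteq> G_even"
      proof
        fix v assume vG: "v \<in> G"
        show "v \<in> G_even"
        proof (rule ccontr)
          assume "v \<notin> G_even"
          then have "odd (card {i. v $ i \<noteq> 0})" unfolding G_even_def by simp
          then have "v + e i0 \<in> G" using D[of "{i. v $ i \<noteq> 0}"] vchi[of v] by simp
          then have "v + (v + e i0) \<in> G" using add vG by blast
          then have "e i0 \<in> G" by (metis add.assoc bitv_add_self add_0)
          then show False using A by blast
        qed
      qed
      show "G_even \<subseteq> G"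
      proof
        fix v :: "bit^'n" assume "v \<in> G_even"
        then have "even (card {i. v $ i \<noteq> 0})" unfolding G_even_def by simp
        then show "v \<in> G" using D[of "{i. v $ i \<noteq> 0}"] vchi[of v] by simp
      qed
    qed
    have "(ones_Z2 :: bit^'n) \<in> G_even" using GE assms(2) by simp
    then show "even (CARD('n))" unfolding G_even_def ones_Z2_def by simp
    show "G = G_even" using GE .
  }
qed

end
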